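(* Let $M$ and $N$ be objects of an abelian category $\mathcal{A}$. (1) Assume that every direct summand of $M$ is isomorphic to a subobject of $N$. Then $N$ is strongly $M$-Rickart if and only if $N$ is $M$-Rickart and $M$ is weak duo. (2) Assume that every direct summand of $N$ is isomorphic to a factor object of $M$. Then $N$ is dual strongly $M$-Rickart if and only if $N$ is dual $M$-Rickart and $N$ is weak duo.
   Context: A morphism $f:X\to Y$ is a section if $f'f=1_X$ for some $f':Y\to X$, and a retraction if $ff'=1_Y$ for some $f':Y\to X$. A monomorphism $k:K\to M$ is fully invariant if for every $h:M\to M$ there is $\alpha:K\to K$ with $hk=k\alpha$; an epimorphism $c:M\to C$ is fully coinvariant if for every $h:M\to M$ there is $\gamma:C\to C$ with $ch=\gamma c$. For objects $M,N$ of an abelian category: $N$ is $M$-Rickart if the kernel ${\rm ker}(f):{\rm Ker}(f)\to M$ of every morphism $f:M\to N$ is a section; $N$ is dual $M$-Rickart if the cokernel ${\rm coker}(f):N\to{\rm Coker}(f)$ of every morphism $f:M\to N$ is a retraction (equivalently the image ${\rm im}(f)$ is a section); $N$ is strongly $M$-Rickart if the kernel of every morphism $f:M\to N$ is a fully invariant section; $N$ is dual strongly $M$-Rickart if the cokernel of every morphism $f:M\to N$ is a fully coinvariant retraction (equivalently the image of every $f:M\to N$ is a fully invariant section). An object $M$ is weak duo if every section $K\to M$ is fully invariant (equivalently, every retraction $M\to C$ is fully coinvariant). *)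

theory Defs
  imports Main
begin

text \<open>A category is given by a set of objects, a set of arrows, domain and codomain maps,
  composition (comp g f = g after f) and identities; the preadditive structure is
  given by an addition on each hom-set and zero morphisms.\<close>

record ('o, 'm) cat =
  Obj  :: "'o set"
  Arr  :: "'m set"
  dom  :: "'m \<Rightarrow> 'o"
  cod  :: "'m \<Rightarrow> 'o"
  comp :: "'m \<Rightarrow> 'm \<Rightarrow> 'm"
  idm  :: "'o \<Rightarrow> 'm"
  add  :: "'m \<Rightarrow> 'm \<Rightarrow> 'm"
  zero :: "'o \<Rightarrow> 'o \<Rightarrow> 'm"

definition hom :: "('o, 'm) cat \<Rightarrow> 'o \<Rightarrow> 'o \<Rightarrow> 'm set" where
  "hom C A B = {f \<in> Arr C. dom C f = A \<and> cod C f = B}"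

definition category :: "('o, 'm) cat \<Rightarrow> bool" where
  "category C \<longleftrightarrow>
     (\<forall>f \<in> Arr C. dom C f \<in> Obj C \<and> cod C f \<in> Obj C) \<and>
     (\<forall>A \<in> Obj C. idm C A \<in> hom C A A) \<and>
     (\<forall>A \<in> Obj C. \<forall>B \<in> Obj C. \<forall>D \<in> Obj C. \<forall>f \<in> hom C A B. \<forall>g \<in> hom C B D.
        comp C g f \<in> hom C A D) \<and>
     (\<forall>f \<in> Arr C. \<forall>g \<in> Arr C. \<forall>h \<in> Arr C.
        cod C f = dom C g \<longrightarrow> cod C g = dom C h \<longrightarrow>
        comp C h (comp C g f) = comp C (comp C h g) f) \<and>
     (\<forall>f \<in> Arr C. comp C f (idm C (dom C f)) = f \<and> comp C (idm C (cod C f)) f = f)"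

definition preadditive :: "('o, 'm) cat \<Rightarrow> bool" where
  "preadditive C \<longleftrightarrow> category C \<and>
     (\<forall>A \<in> Obj C. \<forall>B \<in> Obj C.
        zero C A B \<in> hom C A B \<and>
        (\<forall>f \<in> hom C A B. \<forall>g \<in> hom C A B. add C f g \<in> hom C A B) \<and>
        (\<forall>f \<in> hom C A B. \<forall>g \<in> hom C A B. \<forall>h \<in> hom C A B.
           add C (add C f g) h = add C f (add C g h)) \<and>
        (\<forall>f \<in> hom C A B. \<forall>g \<in> hom C A B. add C f g = add C g f) \<and>
        (\<forall>f \<in> hom C A B. add C f (zero C A B) = f) \<and>
        (\<forall>f \<in> hom C A B. \<exists>g \<in> hom C A B. add C f g = zero C A B)) \<and>
     (\<forall>A \<in> Obj C. \<forall>B \<in> Obj C. \<forall>D \<in> Obj C.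
        \<forall>f \<in> hom C A B. \<forall>g \<in> hom C B D. \<forall>g' \<in> hom C B D.
          comp C (add C g g') f = add C (comp C g f) (comp C g' f)) \<and>
     (\<forall>A \<in> Obj C. \<forall>B \<in> Obj C. \<forall>D \<in> Obj C.
        \<forall>f \<in> hom C A B. \<forall>f' \<in> hom C A B. \<forall>g \<in> hom C B D.
          comp C g (add C f f') = add C (comp C g f) (comp C g f'))"

definition mono :: "('o, 'm) cat \<Rightarrow> 'm \<Rightarrow> bool" where
  "mono C m \<longleftrightarrow> m \<in> Arr C \<and>
     (\<forall>g \<in> Arr C. \<forall>h \<in> Arr C. cod C g = dom C m \<longrightarrow> cod C h = dom C m \<longrightarrow>
        dom C g = dom C h \<longrightarrow> comp C m g = comp C m h \<longrightarrow> g = h)"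

definition epi :: "('o, 'm) cat \<Rightarrow> 'm \<Rightarrow> bool" where
  "epi C e \<longleftrightarrow> e \<in> Arr C \<and>
     (\<forall>g \<in> Arr C. \<forall>h \<in> Arr C. dom C g = cod C e \<longrightarrow> dom C h = cod C e \<longrightarrow>
        cod C g = cod C h \<longrightarrow> comp C g e = comp C h e \<longrightarrow> g = h)"

definition iso :: "('o, 'm) cat \<Rightarrow> 'm \<Rightarrow> bool" where
  "iso C f \<longleftrightarrow> f \<in> Arr C \<and> (\<exists>g \<in> hom C (cod C f) (dom C f).
     comp C g f = idm C (dom C f) \<and> comp C f g = idm C (cod C f))"

definition is_kernel :: "('o, 'm) cat \<Rightarrow> 'm \<Rightarrow> 'm \<Rightarrow> bool" where
  "is_kernel C f k \<longleftrightarrow> f \<in> Arr C \<and> k \<in> Arr C \<and> cod C k = dom C f \<and>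
     comp C f k = zero C (dom C k) (cod C f) \<and>
     (\<forall>g \<in> Arr C. cod C g = dom C f \<longrightarrow> comp C f g = zero C (dom C g) (cod C f) \<longrightarrow>
        (\<exists>!h. h \<in> hom C (dom C g) (dom C k) \<and> comp C k h = g))"

definition is_cokernel :: "('o, 'm) cat \<Rightarrow> 'm \<Rightarrow> 'm \<Rightarrow> bool" where
  "is_cokernel C f c \<longleftrightarrow> f \<in> Arr C \<and> c \<in> Arr C \<and> dom C c = cod C f \<and>
     comp C c f = zero C (dom C f) (cod C c) \<and>
     (\<forall>g \<in> Arr C. dom C g = cod C f \<longrightarrow> comp C g f = zero C (dom C f) (cod C g) \<longrightarrow>
        (\<exists>!h. h \<in> hom C (cod C c) (cod C g) \<and> comp C h c = g))"

definition abelian_category :: "('o, 'm) cat \<Rightarrow> bool" where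
  "abelian_category C \<longleftrightarrow> preadditive C \<and>
     (\<exists>Z \<in> Obj C. idm C Z = zero C Z Z) \<and>
     (\<forall>A \<in> Obj C. \<forall>B \<in> Obj C. \<exists>P \<in> Obj C. \<exists>i1 \<in> hom C A P. \<exists>i2 \<in> hom C B P.
        \<exists>p1 \<in> hom C P A. \<exists>p2 \<in> hom C P B.
          comp C p1 i1 = idm C A \<and> comp C p2 i2 = idm C B \<and>
          comp C p2 i1 = zero C A B \<and> comp C p1 i2 = zero C B A \<and>
          add C (comp C i1 p1) (comp C i2 p2) = idm C P) \<and>
     (\<forall>f \<in> Arr C. \<exists>k. is_kernel C f k) \<and>
     (\<forall>f \<in> Arr C. \<exists>c. is_cokernel C f c) \<and>
     (\<forall>m. mono C m \<longrightarrow> (\<exists>f. is_kernel C f m)) \<and>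
     (\<forall>e. epi C e \<longrightarrow> (\<exists>f. is_cokernel C f e))"

definition is_section :: "('o, 'm) cat \<Rightarrow> 'm \<Rightarrow> bool" where
  "is_section C f \<longleftrightarrow> f \<in> Arr C \<and> (\<exists>f' \<in> hom C (cod C f) (dom C f). comp C f' f = idm C (dom C f))"

definition is_retraction :: "('o, 'm) cat \<Rightarrow> 'm \<Rightarrow> bool" where
  "is_retraction C f \<longleftrightarrow> f \<in> Arr C \<and> (\<exists>f' \<in> hom C (cod C f) (dom C f). comp C f f' = idm C (cod C f))"

definition fully_invariant :: "('o, 'm) cat \<Rightarrow> 'm \<Rightarrow> bool" where
  "fully_invariant C k \<longleftrightarrow> mono C k \<and>
     (\<forall>h \<in> hom C (cod C k) (cod C k). \<exists>\<alpha> \<in> hom C (dom C k) (dom C k). comp C h k = comp C k \<alpha>)"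

definition fully_coinvariant :: "('o, 'm) cat \<Rightarrow> 'm \<Rightarrow> bool" where
  "fully_coinvariant C c \<longleftrightarrow> epi C c \<and>
     (\<forall>h \<in> hom C (dom C c) (dom C c). \<exists>\<gamma> \<in> hom C (cod C c) (cod C c). comp C c h = comp C \<gamma> c)"

definition Rickart :: "('o, 'm) cat \<Rightarrow> 'o \<Rightarrow> 'o \<Rightarrow> bool" where
  "Rickart C M N \<longleftrightarrow> (\<forall>f \<in> hom C M N. \<forall>k. is_kernel C f k \<longrightarrow> is_section C k)"

definition dual_Rickart :: "('o, 'm) cat \<Rightarrow> 'o \<Rightarrow> 'o \<Rightarrow> bool" where
  "dual_Rickart C M N \<longleftrightarrow> (\<forall>f \<in> hom C M N. \<forall>c. is_cokernel C f c \<longrightarrow> is_retraction C c)"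

definition strongly_Rickart :: "('o, 'm) cat \<Rightarrow> 'o \<Rightarrow> 'o \<Rightarrow> bool" where
  "strongly_Rickart C M N \<longleftrightarrow>
     (\<forall>f \<in> hom C M N. \<forall>k. is_kernel C f k \<longrightarrow> fully_invariant C k \<and> is_section C k)"

definition dual_strongly_Rickart :: "('o, 'm) cat \<Rightarrow> 'o \<Rightarrow> 'o \<Rightarrow> bool" where
  "dual_strongly_Rickart C M N \<longleftrightarrow>
     (\<forall>f \<in> hom C M N. \<forall>c. is_cokernel C f c \<longrightarrow> fully_coinvariant C c \<and> is_retraction C c)"

definition weak_duo :: "('o, 'm) cat \<Rightarrow> 'o \<Rightarrow> bool" where
  "weak_duo C M \<longleftrightarrow> (\<forall>s. s \<in> Arr C \<and> cod C s = M \<and> is_section C s \<longrightarrow> fully_invariant C s)"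

definition direct_summand :: "('o, 'm) cat \<Rightarrow> 'o \<Rightarrow> 'o \<Rightarrow> bool" where
  "direct_summand C K M \<longleftrightarrow> K \<in> Obj C \<and> (\<exists>s \<in> hom C K M. is_section C s)"

definition iso_to_subobject :: "('o, 'm) cat \<Rightarrow> 'o \<Rightarrow> 'o \<Rightarrow> bool" where
  "iso_to_subobject C K N \<longleftrightarrow>
     (\<exists>S \<in> Obj C. \<exists>\<phi> \<in> hom C K S. \<exists>m \<in> hom C S N. iso C \<phi> \<and> mono C m)"

definition iso_to_factor :: "('o, 'm) cat \<Rightarrow> 'o \<Rightarrow> 'o \<Rightarrow> bool" where
  "iso_to_factor C K M \<longleftrightarrow>
     (\<exists>Q \<in> Obj C. \<exists>\<phi> \<in> hom C K Q. \<exists>e \<in> hom C M Q. iso C \<phi> \<and> epi C e)"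

end

theory Submission
  imports Defs
begin

lemma pa_cat: "preadditive C \<Longrightarrow> category C"
  by (simp add: preadditive_def)

lemma homD: "f \<in> hom C A B \<Longrightarrow> f \<in> Arr C \<and> dom C f = A \<and> cod C f = B"
  by (simp add: hom_def)

lemma homI: "f \<in> Arr C \<Longrightarrow> f \<in> hom C (dom C f) (cod C f)"
  by (simp add: hom_def)

lemma catD: "category C \<Longrightarrow>
     (\<forall>f \<in> Arr C. dom C f \<in> Obj C \<and> cod C f \<in> Obj C) \<and>
     (\<forall>A \<in> Obj C. idm C A \<in> hom C A A) \<and>
     (\<forall>A \<in> Obj C. \<forall>B \<in> Obj C. \<forall>D \<in> Obj C. \<forall>f \<in> hom C A B. \<forall>g \<in> hom C B D.
        comp C g f \<in> hom C A D) \<and>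
     (\<forall>f \<in> Arr C. \<forall>g \<in> Arr C. \<forall>h \<in> Arr C.
        cod C f = dom C g \<longrightarrow> cod C g = dom C h \<longrightarrow>
        comp C h (comp C g f) = comp C (comp C h g) f) \<and>
     (\<forall>f \<in> Arr C. comp C f (idm C (dom C f)) = f \<and> comp C (idm C (cod C f)) f = f)"
  unfolding category_def by assumption

lemma hom_obj: "category C \<Longrightarrow> f \<in> hom C A B \<Longrightarrow> A \<in> Obj C \<and> B \<in> Obj C"
proof -
  assume c: "category C" and f: "f \<in> hom C A B"
  have "\<forall>f \<in> Arr C. dom C f \<in> Obj C \<and> cod C f \<in> Obj C" using catD[OF c] by (elim conjE)
  then show ?thesis using f unfolding hom_def by auto
qed

lemma comp_in: "category C \<Longrightarrow> f \<in> hom C A B \<Longrightarrow> g \<in> hom C B D \<Longrightarrow> comp C g f \<in> hom C A D"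
proof -
  assume c: "category C" and f: "f \<in> hom C A B" and g: "g \<in> hom C B D"
  have "\<forall>A \<in> Obj C. \<forall>B \<in> Obj C. \<forall>D \<in> Obj C. \<forall>f \<in> hom C A B. \<forall>g \<in> hom C B D.
        comp C g f \<in> hom C A D" using catD[OF c] by (elim conjE)
  then show ?thesis using f g hom_obj[OF c f] hom_obj[OF c g] by blast
qed

lemma assoc: "category C \<Longrightarrow> f \<in> hom C A B \<Longrightarrow> g \<in> hom C B D \<Longrightarrow> h \<in> hom C D E \<Longrightarrow>
   comp C h (comp C g f) = comp C (comp C h g) f"
proof -
  assume c: "category C" and f: "f \<in> hom C A B" and g: "g \<in> hom C B D" and h: "h \<in> hom C D E"
  have "\<forall>f \<in> Arr C. \<forall>g \<in> Arr C. \<forall>h \<in> Arr C.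
        cod C f = dom C g \<longrightarrow> cod C g = dom C h \<longrightarrow>
        comp C h (comp C g f) = comp C (comp C h g) f" using catD[OF c] by (elim conjE)
  then show ?thesis using f g h unfolding hom_def by auto
qed

lemma id_in: "category C \<Longrightarrow> A \<in> Obj C \<Longrightarrow> idm C A \<in> hom C A A"
  using catD by blast

lemma id_r: "category C \<Longrightarrow> f \<in> hom C A B \<Longrightarrow> comp C f (idm C A) = f"
proof -
  assume c: "category C" and f: "f \<in> hom C A B"
  have "\<forall>f \<in> Arr C. comp C f (idm C (dom C f)) = f \<and> comp C (idm C (cod C f)) f = f" using catD[OF c] by (elim conjE)
  then show ?thesis using f unfolding hom_def by auto
qed

lemma id_l: "category C \<Longrightarrow> f \<in> hom C A B \<Longrightarrow> comp C (idm C B) f = f"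
proof -
  assume c: "category C" and f: "f \<in> hom C A B"
  have "\<forall>f \<in> Arr C. comp C f (idm C (dom C f)) = f \<and> comp C (idm C (cod C f)) f = f" using catD[OF c] by (elim conjE)
  then show ?thesis using f unfolding hom_def by auto
qed
lemma pa_AB: "preadditive C \<Longrightarrow> A \<in> Obj C \<Longrightarrow> B \<in> Obj C \<Longrightarrow>
        zero C A B \<in> hom C A B \<and>
        (\<forall>f \<in> hom C A B. \<forall>g \<in> hom C A B. add C f g \<in> hom C A B) \<and>
        (\<forall>f \<in> hom C A B. \<forall>g \<in> hom C A B. \<forall>h \<in> hom C A B.
           add C (add C f g) h = add C f (add C g h)) \<and>
        (\<forall>f \<in> hom C A B. \<forall>g \<in> hom C A B. add C f g = add C g f) \<and>
        (\<forall>f \<in> hom C A B. add C f (zero C A B) = f) \<and>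
        (\<forall>f \<in> hom C A B. \<exists>g \<in> hom C A B. add C f g = zero C A B)"
  unfolding preadditive_def by (elim conjE) (drule bspec, assumption, drule bspec, assumption, assumption)
lemma pa_r: "preadditive C \<Longrightarrow> A \<in> Obj C \<Longrightarrow> B \<in> Obj C \<Longrightarrow> D \<in> Obj C \<Longrightarrow>
        f \<in> hom C A B \<Longrightarrow> g \<in> hom C B D \<Longrightarrow> g' \<in> hom C B D \<Longrightarrow>
          comp C (add C g g') f = add C (comp C g f) (comp C g' f)"
  unfolding preadditive_def by (elim conjE) (drule bspec, assumption)+
lemma pa_l: "preadditive C \<Longrightarrow> A \<in> Obj C \<Longrightarrow> B \<in> Obj C \<Longrightarrow> D \<in> Obj C \<Longrightarrow>
        f \<in> hom C A B \<Longrightarrow> f' \<in> hom C A B \<Longrightarrow> g \<in> hom C B D \<Longrightarrow>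
          comp C g (add C f f') = add C (comp C g f) (comp C g f')"
  unfolding preadditive_def by (elim conjE) (drule bspec, assumption)+
lemma objs: "preadditive C \<Longrightarrow> f \<in> hom C A B \<Longrightarrow> A \<in> Obj C \<and> B \<in> Obj C"
  by (rule hom_obj[OF pa_cat])

lemma zero_in: "preadditive C \<Longrightarrow> A \<in> Obj C \<Longrightarrow> B \<in> Obj C \<Longrightarrow> zero C A B \<in> hom C A B"
proof -
  assume P: "preadditive C" and A: "A \<in> Obj C" and B: "B \<in> Obj C"
  from pa_AB[OF P A B] show ?thesis by (elim conjE)
qed

lemma add_in: "preadditive C \<Longrightarrow> f \<in> hom C A B \<Longrightarrow> g \<in> hom C A B \<Longrightarrow> add C f g \<in> hom C A B"
proof -
  assume P: "preadditive C" and f: "f \<in> hom C A B" and g: "g \<in> hom C A B"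
  have "\<forall>f \<in> hom C A B. \<forall>g \<in> hom C A B. add C f g \<in> hom C A B"
    using pa_AB[OF P conjunct1[OF objs[OF P f]] conjunct2[OF objs[OF P f]]] by (elim conjE)
  then show ?thesis using f g by blast
qed

lemma add_assoc: "preadditive C \<Longrightarrow> f \<in> hom C A B \<Longrightarrow> g \<in> hom C A B \<Longrightarrow> h \<in> hom C A B \<Longrightarrow>
   add C (add C f g) h = add C f (add C g h)"
proof -
  assume P: "preadditive C" and f: "f \<in> hom C A B" and g: "g \<in> hom C A B" and h: "h \<in> hom C A B"
  have "\<forall>f \<in> hom C A B. \<forall>g \<in> hom C A B. \<forall>h \<in> hom C A B.
           add C (add C f g) h = add C f (add C g h)"
    using pa_AB[OF P conjunct1[OF objs[OF P f]] conjunct2[OF objs[OF P f]]] by (elim conjE)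
  then show ?thesis using f g h by blast
qed

lemma add_comm: "preadditive C \<Longrightarrow> f \<in> hom C A B \<Longrightarrow> g \<in> hom C A B \<Longrightarrow> add C f g = add C g f"
proof -
  assume P: "preadditive C" and f: "f \<in> hom C A B" and g: "g \<in> hom C A B"
  have "\<forall>f \<in> hom C A B. \<forall>g \<in> hom C A B. add C f g = add C g f"
    using pa_AB[OF P conjunct1[OF objs[OF P f]] conjunct2[OF objs[OF P f]]] by (elim conjE)
  then show ?thesis using f g by blast
qed

lemma add_zero: "preadditive C \<Longrightarrow> f \<in> hom C A B \<Longrightarrow> add C f (zero C A B) = f"
proof -
  assume P: "preadditive C" and f: "f \<in> hom C A B"
  have "\<forall>f \<in> hom C A B. add C f (zero C A B) = f"
    using pa_AB[OF P conjunct1[OF objs[OF P f]] conjunct2[OF objs[OF P f]]] by (elim conjE)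
  then show ?thesis using f by blast
qed

lemma zero_add: "preadditive C \<Longrightarrow> f \<in> hom C A B \<Longrightarrow> add C (zero C A B) f = f"
proof -
  assume P: "preadditive C" and f: "f \<in> hom C A B"
  have z: "zero C A B \<in> hom C A B" using objs[OF P f] zero_in[OF P] by blast
  show ?thesis using add_comm[OF P z f] add_zero[OF P f] by simp
qed

lemma neg_ex: "preadditive C \<Longrightarrow> f \<in> hom C A B \<Longrightarrow> \<exists>g \<in> hom C A B. add C f g = zero C A B"
proof -
  assume P: "preadditive C" and f: "f \<in> hom C A B"
  have "\<forall>f \<in> hom C A B. \<exists>g \<in> hom C A B. add C f g = zero C A B"
    using pa_AB[OF P conjunct1[OF objs[OF P f]] conjunct2[OF objs[OF P f]]] by (elim conjE)
  then show ?thesis using f by blast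
qed

lemma distr_r: "preadditive C \<Longrightarrow> f \<in> hom C A B \<Longrightarrow> g \<in> hom C B D \<Longrightarrow> g' \<in> hom C B D \<Longrightarrow>
   comp C (add C g g') f = add C (comp C g f) (comp C g' f)"
proof -
  assume P: "preadditive C" and f: "f \<in> hom C A B" and g: "g \<in> hom C B D" and g': "g' \<in> hom C B D"
  have A: "A \<in> Obj C" and B: "B \<in> Obj C" using objs[OF P f] by auto
  have D: "D \<in> Obj C" using objs[OF P g] by auto
  show ?thesis by (rule pa_r[OF P A B D f g g'])
qed

lemma distr_l: "preadditive C \<Longrightarrow> f \<in> hom C A B \<Longrightarrow> f' \<in> hom C A B \<Longrightarrow> g \<in> hom C B D \<Longrightarrow>
   comp C g (add C f f') = add C (comp C g f) (comp C g f')"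
proof -
  assume P: "preadditive C" and f: "f \<in> hom C A B" and f': "f' \<in> hom C A B" and g: "g \<in> hom C B D"
  have A: "A \<in> Obj C" and B: "B \<in> Obj C" using objs[OF P f] by auto
  have D: "D \<in> Obj C" using objs[OF P g] by auto
  show ?thesis by (rule pa_l[OF P A B D f f' g])
qed

lemma cancel0: "preadditive C \<Longrightarrow> x \<in> hom C A B \<Longrightarrow> y \<in> hom C A B \<Longrightarrow> add C x y = y \<Longrightarrow> x = zero C A B"
proof -
  assume P: "preadditive C" and x: "x \<in> hom C A B" and y: "y \<in> hom C A B" and e: "add C x y = y"
  obtain u where u: "u \<in> hom C A B" "add C y u = zero C A B" using neg_ex[OF P y] by blast
  have "x = add C x (add C y u)" using u add_zero[OF P x] by simp
  also have "\<dots> = add C (add C x y) u" using add_assoc[OF P x y u(1)] by simp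
  also have "\<dots> = zero C A B" using e u by simp
  finally show ?thesis .
qed

lemma comp_zero_r: "preadditive C \<Longrightarrow> g \<in> hom C A B \<Longrightarrow> X \<in> Obj C \<Longrightarrow> comp C g (zero C X A) = zero C X B"
proof -
  assume P: "preadditive C" and g: "g \<in> hom C A B" and X: "X \<in> Obj C"
  have c: "category C" using P pa_cat by blast
  have A: "A \<in> Obj C" using hom_obj[OF c g] by blast
  have z: "zero C X A \<in> hom C X A" using zero_in[OF P X A] .
  have w: "comp C g (zero C X A) \<in> hom C X B" using comp_in[OF c z g] .
  have "comp C g (zero C X A) = comp C g (add C (zero C X A) (zero C X A))" using add_zero[OF P z] by simp
  also have "\<dots> = add C (comp C g (zero C X A)) (comp C g (zero C X A))" using distr_l[OF P z z g] .
  finally show ?thesis using cancel0[OF P w w] by simp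
qed

lemma comp_zero_l: "preadditive C \<Longrightarrow> f \<in> hom C A B \<Longrightarrow> D \<in> Obj C \<Longrightarrow> comp C (zero C B D) f = zero C A D"
proof -
  assume P: "preadditive C" and f: "f \<in> hom C A B" and D: "D \<in> Obj C"
  have c: "category C" using P pa_cat by blast
  have B: "B \<in> Obj C" using hom_obj[OF c f] by blast
  have z: "zero C B D \<in> hom C B D" using zero_in[OF P B D] .
  have w: "comp C (zero C B D) f \<in> hom C A D" using comp_in[OF c f z] .
  have "comp C (zero C B D) f = comp C (add C (zero C B D) (zero C B D)) f" using add_zero[OF P z] by simp
  also have "\<dots> = add C (comp C (zero C B D) f) (comp C (zero C B D) f)" using distr_r[OF P f z z] .
  finally show ?thesis using cancel0[OF P w w] by simp
qed


lemma ker_ex: "abelian_category C \<Longrightarrow> f \<in> Arr C \<Longrightarrow> \<exists>k. is_kernel C f k"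
  unfolding abelian_category_def by (elim conjE) (drule bspec, assumption)
lemma coker_ex: "abelian_category C \<Longrightarrow> f \<in> Arr C \<Longrightarrow> \<exists>k. is_cokernel C f k"
  unfolding abelian_category_def by (elim conjE) (drule bspec, assumption)
lemma abel_pa: "abelian_category C \<Longrightarrow> preadditive C"
  unfolding abelian_category_def by (elim conjE)
lemma kernelD: "is_kernel C f k \<Longrightarrow> g \<in> hom C X (dom C f) \<Longrightarrow> comp C f g = zero C X (cod C f) \<Longrightarrow>
   \<exists>!h. h \<in> hom C X (dom C k) \<and> comp C k h = g"
  unfolding is_kernel_def hom_def by (elim conjE, drule bspec[where x=g]) auto
lemma kernelD0: "is_kernel C f k \<Longrightarrow> k \<in> hom C (dom C k) (dom C f) \<and> f \<in> hom C (dom C f) (cod C f) \<and> comp C f k = zero C (dom C k) (cod C f)"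
  unfolding is_kernel_def hom_def by simp
lemma cokernelD: "is_cokernel C f c \<Longrightarrow> g \<in> hom C (cod C f) Y \<Longrightarrow> comp C g f = zero C (dom C f) Y \<Longrightarrow>
   \<exists>!h. h \<in> hom C (cod C c) Y \<and> comp C h c = g"
  unfolding is_cokernel_def hom_def by (elim conjE, drule bspec[where x=g]) auto
lemma cokernelD0: "is_cokernel C f c \<Longrightarrow> c \<in> hom C (cod C f) (cod C c) \<and> f \<in> hom C (dom C f) (cod C f) \<and> comp C c f = zero C (dom C f) (cod C c)"
  unfolding is_cokernel_def hom_def by simp
lemma ex1_uniq: "\<exists>!x. P x \<Longrightarrow> P a \<Longrightarrow> P b \<Longrightarrow> a = b"
  unfolding Ex1_def by (elim exE conjE) (metis)

lemma kernel_canc: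
  assumes P: "preadditive C" and k: "is_kernel C f k"
    and g1: "g1 \<in> hom C X (dom C k)" and g2: "g2 \<in> hom C X (dom C k)"
    and e: "comp C k g1 = comp C k g2"
  shows "g1 = g2"
proof -
  have c: "category C" using P pa_cat by blast
  have kh: "k \<in> hom C (dom C k) (dom C f)" and fh: "f \<in> hom C (dom C f) (cod C f)"
    and kz: "comp C f k = zero C (dom C k) (cod C f)"
    using conjunct1[OF kernelD0[OF k]] conjunct1[OF conjunct2[OF kernelD0[OF k]]] conjunct2[OF conjunct2[OF kernelD0[OF k]]]
    by - assumption+
  have X: "X \<in> Obj C" using hom_obj[OF c g1] by blast
  have D: "cod C f \<in> Obj C" using hom_obj[OF c fh] by blast
  let ?g = "comp C k g1"
  have gh: "?g \<in> hom C X (dom C f)" using comp_in[OF c g1 kh] .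
  have "comp C f ?g = comp C (comp C f k) g1" using assoc[OF c g1 kh fh] .
  also have "\<dots> = zero C X (cod C f)" using kz comp_zero_l[OF P g1 D] by simp
  finally have z: "comp C f ?g = zero C X (cod C f)" .
  have "\<exists>!h. h \<in> hom C X (dom C k) \<and> comp C k h = ?g"
    using kernelD[OF k gh z] .
  then show ?thesis
  proof (rule ex1_uniq)
    show "g1 \<in> hom C X (dom C k) \<and> comp C k g1 = comp C k g1" using g1 by simp
    show "g2 \<in> hom C X (dom C k) \<and> comp C k g2 = comp C k g1" using g2 e by simp
  qed
qed

lemma complement:
  assumes A: "abelian_category C" and s: "s \<in> hom C K M" and s': "s' \<in> hom C M K"
    and ss: "comp C s' s = idm C K"
  shows "\<exists>L j q. j \<in> hom C L M \<and> q \<in> hom C M L \<and> comp C q j = idm C L \<and>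
           add C (comp C j q) (comp C s s') = idm C M \<and> comp C s' j = zero C L K \<and>
           comp C q s = zero C K L"
proof -
  have P: "preadditive C" using A by (rule abel_pa)
  have c: "category C" using P pa_cat by blast
  have K: "K \<in> Obj C" and M: "M \<in> Obj C" using hom_obj[OF c s] by auto
  have iM: "idm C M \<in> hom C M M" using id_in[OF c M] .
  have e: "comp C s s' \<in> hom C M M" using comp_in[OF c s' s] .
  obtain u where u: "u \<in> hom C M M" "add C (comp C s s') u = zero C M M" using neg_ex[OF P e] by blast
  define t where "t = add C (idm C M) u"
  have th: "t \<in> hom C M M" unfolding t_def using add_in[OF P iM u(1)] .
  have ht: "add C t (comp C s s') = idm C M"
    unfolding t_def using add_assoc[OF P iM u(1) e] add_comm[OF P u(1) e] u(2) add_zero[OF P iM] by simp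
  have "comp C s' (add C t (comp C s s')) = s'" using ht id_r[OF c s'] by simp
  moreover have "comp C s' (add C t (comp C s s')) = add C (comp C s' t) (comp C s' (comp C s s'))"
    using distr_l[OF P th e s'] .
  moreover have "comp C s' (comp C s s') = s'" using assoc[OF c s' s s'] ss id_l[OF c s'] by simp
  ultimately have st: "comp C s' t = zero C M K" using cancel0[OF P comp_in[OF c th s'] s'] by simp
  have "comp C (add C t (comp C s s')) s = s" using ht id_l[OF c s] by simp
  moreover have "comp C (add C t (comp C s s')) s = add C (comp C t s) (comp C (comp C s s') s)"
    using distr_r[OF P s th e] .
  moreover have "comp C (comp C s s') s = s" using assoc[OF c s s' s] ss id_r[OF c s] by simp
  ultimately have ts: "comp C t s = zero C K M" using cancel0[OF P comp_in[OF c s th] s] by simp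
  obtain j where k: "is_kernel C s' j" using ker_ex[OF A] s' by (auto simp: hom_def)
  define L where "L = dom C j"
  have s'd: "dom C s' = M" "cod C s' = K" using s' by (auto simp: hom_def)
  have jh: "j \<in> hom C L M" and sj: "comp C s' j = zero C L K"
    using conjunct1[OF kernelD0[OF k]] conjunct2[OF conjunct2[OF kernelD0[OF k]]] s'd unfolding L_def by simp_all
  have "\<exists>!h. h \<in> hom C M L \<and> comp C j h = t"
    using kernelD[OF k, of t M] th st s'd unfolding L_def by simp
  then obtain q where qh: "q \<in> hom C M L" and jq: "comp C j q = t" by blast
  have L: "L \<in> Obj C" using hom_obj[OF c jh] by blast
  have "comp C (add C t (comp C s s')) j = j" using ht id_l[OF c jh] by simp
  moreover have "comp C (add C t (comp C s s')) j = add C (comp C t j) (comp C (comp C s s') j)"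
    using distr_r[OF P jh th e] .
  moreover have "comp C (comp C s s') j = zero C L M"
    using assoc[OF c jh s' s] sj comp_zero_r[OF P s L] by simp
  ultimately have tj: "comp C t j = j" using add_zero[OF P comp_in[OF c jh th]] by simp
  have "comp C j (comp C q j) = comp C j (idm C L)"
    using assoc[OF c jh qh jh] jq tj id_r[OF c jh] by simp
  hence qj: "comp C q j = idm C L"
    using kernel_canc[OF P k, of "comp C q j" L "idm C L"] comp_in[OF c jh qh] id_in[OF c L]
    unfolding L_def by simp
  have "comp C j (comp C q s) = comp C j (zero C K L)"
    using assoc[OF c s qh jh] jq ts comp_zero_r[OF P jh K] by simp
  hence qs: "comp C q s = zero C K L"
    using kernel_canc[OF P k, of "comp C q s" K "zero C K L"] comp_in[OF c s qh] zero_in[OF P K L]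
    unfolding L_def by simp
  show ?thesis
    apply (rule exI[of _ L], rule exI[of _ j], rule exI[of _ q])
    using jh qh qj jq ht sj qs by simp
qed


lemma section_mono:
  assumes cC: "category C" and s: "s \<in> hom C K M" and s': "s' \<in> hom C M K"
    and ss: "comp C s' s = idm C K"
  shows "mono C s"
  unfolding mono_def
proof (intro conjI ballI impI)
  show "s \<in> Arr C" using s by (simp add: hom_def)
  fix g h assume g: "g \<in> Arr C" and h: "h \<in> Arr C" and cg: "cod C g = dom C s" and ch: "cod C h = dom C s"
    and dd: "dom C g = dom C h" and eq: "comp C s g = comp C s h"
  have gh: "g \<in> hom C (dom C g) K" using g cg s by (simp add: hom_def)
  have hh: "h \<in> hom C (dom C g) K" using h ch s dd by (simp add: hom_def)
  have "g = comp C (comp C s' s) g" using ss id_l[OF cC gh] by simp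
  also have "\<dots> = comp C s' (comp C s g)" using assoc[OF cC gh s s'] by simp
  also have "\<dots> = comp C s' (comp C s h)" using eq by simp
  also have "\<dots> = comp C (comp C s' s) h" using assoc[OF cC hh s s'] by simp
  also have "\<dots> = h" using ss id_l[OF cC hh] by simp
  finally show "g = h" .
qed

lemma retraction_epi:
  assumes cC: "category C" and c: "c \<in> hom C N Q" and r: "r \<in> hom C Q N"
    and cr: "comp C c r = idm C Q"
  shows "epi C c"
  unfolding epi_def
proof (intro conjI ballI impI)
  show "c \<in> Arr C" using c by (simp add: hom_def)
  fix g h assume g: "g \<in> Arr C" and h: "h \<in> Arr C" and cg: "dom C g = cod C c" and ch: "dom C h = cod C c"
    and dd: "cod C g = cod C h" and eq: "comp C g c = comp C h c"
  have gh: "g \<in> hom C Q (cod C g)" using g cg c by (simp add: hom_def)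
  have hh: "h \<in> hom C Q (cod C g)" using h ch c dd by (simp add: hom_def)
  have "g = comp C g (comp C c r)" using cr id_r[OF cC gh] by simp
  also have "\<dots> = comp C (comp C g c) r" using assoc[OF cC r c gh] by simp
  also have "\<dots> = comp C (comp C h c) r" using eq by simp
  also have "\<dots> = comp C h (comp C c r)" using assoc[OF cC r c hh] by simp
  also have "\<dots> = h" using cr id_r[OF cC hh] by simp
  finally show "g = h" .
qed

lemma monoD:
  assumes "mono C m" and "m \<in> hom C A B" and "g \<in> hom C X A" and "h \<in> hom C X A"
    and "comp C m g = comp C m h"
  shows "g = h"
proof -
  have "\<forall>g \<in> Arr C. \<forall>h \<in> Arr C. cod C g = dom C m \<longrightarrow> cod C h = dom C m \<longrightarrow>
        dom C g = dom C h \<longrightarrow> comp C m g = comp C m h \<longrightarrow> g = h"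
    using assms(1) unfolding mono_def by (elim conjE)
  then show ?thesis using assms(2-5) unfolding hom_def by simp
qed

lemma epiD:
  assumes "epi C e" and "e \<in> hom C A B" and "g \<in> hom C B Y" and "h \<in> hom C B Y"
    and "comp C g e = comp C h e"
  shows "g = h"
proof -
  have "\<forall>g \<in> Arr C. \<forall>h \<in> Arr C. dom C g = cod C e \<longrightarrow> dom C h = cod C e \<longrightarrow>
        cod C g = cod C h \<longrightarrow> comp C g e = comp C h e \<longrightarrow> g = h"
    using assms(1) unfolding epi_def by (elim conjE)
  then show ?thesis using assms(2-5) unfolding hom_def by simp
qed


lemma p1_fwd:
  assumes A: "abelian_category C" and N: "N \<in> Obj C"
    and H: "\<forall>K. direct_summand C K M \<longrightarrow> iso_to_subobject C K N"
    and SR: "strongly_Rickart C M N"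
  shows "weak_duo C M"
  unfolding weak_duo_def
proof (intro allI impI, elim conjE)
  fix s assume sa: "s \<in> Arr C" and cs: "cod C s = M" and sec: "is_section C s"
  have P: "preadditive C" using A by (rule abel_pa)
  have cC: "category C" using P by (rule pa_cat)
  define K where "K = dom C s"
  have s: "s \<in> hom C K M" using sa cs unfolding K_def hom_def by simp
  obtain s' where s': "s' \<in> hom C M K" and ss: "comp C s' s = idm C K"
    using sec cs unfolding is_section_def K_def by blast
  have K: "K \<in> Obj C" and M: "M \<in> Obj C" using hom_obj[OF cC s] by auto
  obtain L j q where jh: "j \<in> hom C L M" and qh: "q \<in> hom C M L" and qj: "comp C q j = idm C L"
    and jqss: "add C (comp C j q) (comp C s s') = idm C M" and s'j: "comp C s' j = zero C L K"
    and qs: "comp C q s = zero C K L"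
    using complement[OF A s s' ss] by blast
  have L: "L \<in> Obj C" using hom_obj[OF cC jh] by blast
  have "direct_summand C L M"
    unfolding direct_summand_def is_section_def
  proof (intro conjI bexI)
    show "L \<in> Obj C" by (rule L)
    show "j \<in> hom C L M" by (rule jh)
    show "j \<in> Arr C" using jh by (simp add: hom_def)
    show "q \<in> hom C (cod C j) (dom C j)" using jh qh by (simp add: hom_def)
    show "comp C q j = idm C (dom C j)" using jh qj by (simp add: hom_def)
  qed
  then have "iso_to_subobject C L N" using H by blast
  then obtain S \<phi> m where S: "S \<in> Obj C" and ph: "\<phi> \<in> hom C L S" and mh: "m \<in> hom C S N"
    and isoph: "iso C \<phi>" and mm: "mono C m"
    unfolding iso_to_subobject_def by blast
  obtain \<psi> where psh: "\<psi> \<in> hom C S L" and psph: "comp C \<psi> \<phi> = idm C L"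
    using isoph ph unfolding iso_def hom_def by auto
  define f where "f = comp C m (comp C \<phi> q)"
  have phq: "comp C \<phi> q \<in> hom C M S" using comp_in[OF cC qh ph] .
  have fh: "f \<in> hom C M N" unfolding f_def using comp_in[OF cC phq mh] .
  have "is_kernel C f s"
    unfolding is_kernel_def
  proof (intro conjI ballI impI)
    show "f \<in> Arr C" using fh by (simp add: hom_def)
    show "s \<in> Arr C" by (rule sa)
    show "cod C s = dom C f" using fh cs by (simp add: hom_def)
    have "comp C f s = comp C m (comp C (comp C \<phi> q) s)"
      unfolding f_def using assoc[OF cC s phq mh] by simp
    also have "\<dots> = comp C m (comp C \<phi> (comp C q s))" using assoc[OF cC s qh ph] by simp
    also have "\<dots> = comp C m (comp C \<phi> (zero C K L))" using qs by simp
    also have "\<dots> = comp C m (zero C K S)" using comp_zero_r[OF P ph K] by simp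
    also have "\<dots> = zero C K N" using comp_zero_r[OF P mh K] by simp
    finally show "comp C f s = zero C (dom C s) (cod C f)" using fh unfolding K_def hom_def by simp
  next
    fix g assume ga: "g \<in> Arr C" and cg: "cod C g = dom C f"
      and fg: "comp C f g = zero C (dom C g) (cod C f)"
    define X where "X = dom C g"
    have g: "g \<in> hom C X M" using ga cg fh unfolding X_def hom_def by simp
    have X: "X \<in> Obj C" using hom_obj[OF cC g] by blast
    have fg': "comp C f g = zero C X N" using fg fh unfolding X_def hom_def by simp
    have qg: "comp C q g \<in> hom C X L" using comp_in[OF cC g qh] .
    have phqg: "comp C \<phi> (comp C q g) \<in> hom C X S" using comp_in[OF cC qg ph] .
    have "comp C m (comp C \<phi> (comp C q g)) = comp C m (comp C (comp C \<phi> q) g)"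
      using assoc[OF cC g qh ph] by simp
    also have "\<dots> = comp C f g" unfolding f_def using assoc[OF cC g phq mh] by simp
    also have "\<dots> = comp C m (zero C X S)" using fg' comp_zero_r[OF P mh X] by simp
    finally have "comp C \<phi> (comp C q g) = zero C X S"
      using monoD[OF mm mh phqg zero_in[OF P X S]] by blast
    then have "comp C \<psi> (comp C \<phi> (comp C q g)) = zero C X L"
      using comp_zero_r[OF P psh X] by simp
    moreover have "comp C \<psi> (comp C \<phi> (comp C q g)) = comp C q g"
      using assoc[OF cC qg ph psh] psph id_l[OF cC qg] by simp
    ultimately have qg0: "comp C q g = zero C X L" by simp
    have s'g: "comp C s' g \<in> hom C X K" using comp_in[OF cC g s'] .
    have jqh: "comp C j q \<in> hom C M M" using comp_in[OF cC qh jh] .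
    have ssh: "comp C s s' \<in> hom C M M" using comp_in[OF cC s' s] .
    have "g = comp C (add C (comp C j q) (comp C s s')) g" using jqss id_l[OF cC g] by simp
    also have "\<dots> = add C (comp C (comp C j q) g) (comp C (comp C s s') g)"
      using distr_r[OF P g jqh ssh] .
    also have "comp C (comp C j q) g = zero C X M"
      using assoc[OF cC g qh jh] qg0 comp_zero_r[OF P jh X] by simp
    also have "comp C (comp C s s') g = comp C s (comp C s' g)"
      using assoc[OF cC g s' s] by simp
    also have "add C (zero C X M) (comp C s (comp C s' g)) = comp C s (comp C s' g)"
      using zero_add[OF P comp_in[OF cC s'g s]] .
    finally have gs: "g = comp C s (comp C s' g)" .
    show "\<exists>!h. h \<in> hom C (dom C g) (dom C s) \<and> comp C s h = g"
    proof (rule ex1I[of _ "comp C s' g"])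
      show "comp C s' g \<in> hom C (dom C g) (dom C s) \<and> comp C s (comp C s' g) = g"
        using s'g gs unfolding X_def K_def by simp
    next
      fix y assume y: "y \<in> hom C (dom C g) (dom C s) \<and> comp C s y = g"
      have yh: "y \<in> hom C X K" using y unfolding X_def K_def by simp
      have "y = comp C (comp C s' s) y" using ss id_l[OF cC yh] by simp
      also have "\<dots> = comp C s' (comp C s y)" using assoc[OF cC yh s s'] by simp
      also have "\<dots> = comp C s' g" using y by simp
      finally show "y = comp C s' g" .
    qed
  qed
  then show "fully_invariant C s" using SR fh unfolding strongly_Rickart_def by blast
qed


lemma p2_fwd:
  assumes A: "abelian_category C" and M: "M \<in> Obj C"
    and H: "\<forall>K. direct_summand C K N \<longrightarrow> iso_to_factor C K M"
    and DSR: "dual_strongly_Rickart C M N"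
  shows "weak_duo C N"
  unfolding weak_duo_def
proof (intro allI impI, elim conjE)
  fix s assume sa: "s \<in> Arr C" and cs: "cod C s = N" and sec: "is_section C s"
  have P: "preadditive C" using A by (rule abel_pa)
  have cC: "category C" using P by (rule pa_cat)
  define K where "K = dom C s"
  have s: "s \<in> hom C K N" using sa cs unfolding K_def hom_def by simp
  obtain s' where s': "s' \<in> hom C N K" and ss: "comp C s' s = idm C K"
    using sec cs unfolding is_section_def K_def by blast
  have K: "K \<in> Obj C" and Nobj: "N \<in> Obj C" using hom_obj[OF cC s] by auto
  obtain L j q where jh: "j \<in> hom C L N" and qh: "q \<in> hom C N L" and qj: "comp C q j = idm C L"
    and jqss: "add C (comp C j q) (comp C s s') = idm C N" and s'j: "comp C s' j = zero C L K"
    and qs: "comp C q s = zero C K L"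
    using complement[OF A s s' ss] by blast
  have L: "L \<in> Obj C" using hom_obj[OF cC jh] by blast
  have "direct_summand C K N"
    unfolding direct_summand_def is_section_def
  proof (intro conjI bexI)
    show "K \<in> Obj C" by (rule K)
    show "s \<in> hom C K N" by (rule s)
    show "s \<in> Arr C" by (rule sa)
    show "s' \<in> hom C (cod C s) (dom C s)" using s s' by (simp add: hom_def)
    show "comp C s' s = idm C (dom C s)" using ss unfolding K_def .
  qed
  then have "iso_to_factor C K M" using H by blast
  then obtain Q \<phi> e where Q: "Q \<in> Obj C" and ph: "\<phi> \<in> hom C K Q" and eh: "e \<in> hom C M Q"
    and isoph: "iso C \<phi>" and ee: "epi C e"
    unfolding iso_to_factor_def by blast
  obtain \<psi> where psh: "\<psi> \<in> hom C Q K" and psph: "comp C \<psi> \<phi> = idm C K"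
    using isoph ph unfolding iso_def hom_def by auto
  define f where "f = comp C s (comp C \<psi> e)"
  have pse: "comp C \<psi> e \<in> hom C M K" using comp_in[OF cC eh psh] .
  have fh: "f \<in> hom C M N" unfolding f_def using comp_in[OF cC pse s] .
  have "is_cokernel C f q"
    unfolding is_cokernel_def
  proof (intro conjI ballI impI)
    show "f \<in> Arr C" using fh by (simp add: hom_def)
    show "q \<in> Arr C" using qh by (simp add: hom_def)
    show "dom C q = cod C f" using fh qh by (simp add: hom_def)
    have "comp C q f = comp C (comp C q s) (comp C \<psi> e)"
      unfolding f_def using assoc[OF cC pse s qh] by simp
    also have "\<dots> = zero C M L" using qs comp_zero_l[OF P pse L] by simp
    finally show "comp C q f = zero C (dom C f) (cod C q)" using fh qh by (simp add: hom_def)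
  next
    fix g assume ga: "g \<in> Arr C" and dg: "dom C g = cod C f"
      and gf: "comp C g f = zero C (dom C f) (cod C g)"
    define Y where "Y = cod C g"
    have g: "g \<in> hom C N Y" using ga dg fh unfolding Y_def hom_def by simp
    have Y: "Y \<in> Obj C" using hom_obj[OF cC g] by blast
    have gf': "comp C g f = zero C M Y" using gf fh unfolding Y_def hom_def by simp
    have gs: "comp C g s \<in> hom C K Y" using comp_in[OF cC s g] .
    have gsps: "comp C (comp C g s) \<psi> \<in> hom C Q Y" using comp_in[OF cC psh gs] .
    have zQ: "comp C (zero C K Y) \<psi> \<in> hom C Q Y" using comp_in[OF cC psh zero_in[OF P K Y]] .
    have "comp C (comp C (comp C g s) \<psi>) e = comp C (comp C g s) (comp C \<psi> e)"
      using assoc[OF cC eh psh gs] by simp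
    also have "\<dots> = comp C g f" unfolding f_def using assoc[OF cC pse s g] by simp
    also have "\<dots> = comp C (comp C (zero C K Y) \<psi>) e"
      using gf' comp_zero_l[OF P psh Y] comp_zero_l[OF P eh Y] by simp
    finally have "comp C (comp C g s) \<psi> = comp C (zero C K Y) \<psi>"
      using epiD[OF ee eh gsps zQ] by blast
    then have "comp C (comp C (comp C g s) \<psi>) \<phi> = comp C (comp C (zero C K Y) \<psi>) \<phi>" by simp
    moreover have "comp C (comp C (comp C g s) \<psi>) \<phi> = comp C g s"
      using assoc[OF cC ph psh gs] psph id_r[OF cC gs] by simp
    moreover have "comp C (comp C (zero C K Y) \<psi>) \<phi> = zero C K Y"
      using assoc[OF cC ph psh zero_in[OF P K Y]] psph id_r[OF cC zero_in[OF P K Y]] by simp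
    ultimately have gs0: "comp C g s = zero C K Y" by simp
    have gj: "comp C g j \<in> hom C L Y" using comp_in[OF cC jh g] .
    have jqh: "comp C j q \<in> hom C N N" using comp_in[OF cC qh jh] .
    have ssh: "comp C s s' \<in> hom C N N" using comp_in[OF cC s' s] .
    have "g = comp C g (add C (comp C j q) (comp C s s'))" using jqss id_r[OF cC g] by simp
    also have "\<dots> = add C (comp C g (comp C j q)) (comp C g (comp C s s'))"
      using distr_l[OF P jqh ssh g] .
    also have "comp C g (comp C s s') = zero C N Y"
      using assoc[OF cC s' s g] gs0 comp_zero_l[OF P s' Y] by simp
    also have "comp C g (comp C j q) = comp C (comp C g j) q"
      using assoc[OF cC qh jh g] by simp
    also have "add C (comp C (comp C g j) q) (zero C N Y) = comp C (comp C g j) q"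
      using add_zero[OF P comp_in[OF cC qh gj]] .
    finally have gq: "g = comp C (comp C g j) q" .
    show "\<exists>!h. h \<in> hom C (cod C q) (cod C g) \<and> comp C h q = g"
    proof (rule ex1I[of _ "comp C g j"])
      show "comp C g j \<in> hom C (cod C q) (cod C g) \<and> comp C (comp C g j) q = g"
        using gj gq qh unfolding Y_def hom_def by simp
    next
      fix y assume y: "y \<in> hom C (cod C q) (cod C g) \<and> comp C y q = g"
      have yh: "y \<in> hom C L Y" using y qh unfolding Y_def hom_def by simp
      have "y = comp C y (comp C q j)" using qj id_r[OF cC yh] by simp
      also have "\<dots> = comp C (comp C y q) j" using assoc[OF cC jh qh yh] by simp
      also have "\<dots> = comp C g j" using y by simp
      finally show "y = comp C g j" .
    qed
  qed
  then have fc: "fully_coinvariant C q" using DSR fh unfolding dual_strongly_Rickart_def by blast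
  show "fully_invariant C s"
    unfolding fully_invariant_def
  proof (intro conjI ballI)
    show "mono C s" using section_mono[OF cC s s' ss] .
    fix h assume hh0: "h \<in> hom C (cod C s) (cod C s)"
    have hh: "h \<in> hom C N N" using hh0 cs by simp
    obtain \<gamma> where gah: "\<gamma> \<in> hom C L L" and qhg: "comp C q h = comp C \<gamma> q"
      using fc hh qh unfolding fully_coinvariant_def hom_def by auto
    have hs: "comp C h s \<in> hom C K N" using comp_in[OF cC s hh] .
    have "comp C q (comp C h s) = comp C (comp C q h) s" using assoc[OF cC s hh qh] by simp
    also have "\<dots> = comp C \<gamma> (comp C q s)" using qhg assoc[OF cC s qh gah] by simp
    also have "\<dots> = zero C K L" using qs comp_zero_r[OF P gah K] by simp
    finally have qhs: "comp C q (comp C h s) = zero C K L" .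
    have jqh: "comp C j q \<in> hom C N N" using comp_in[OF cC qh jh] .
    have ssh: "comp C s s' \<in> hom C N N" using comp_in[OF cC s' s] .
    have s'hs: "comp C s' (comp C h s) \<in> hom C K K" using comp_in[OF cC hs s'] .
    have "comp C h s = comp C (add C (comp C j q) (comp C s s')) (comp C h s)" using jqss id_l[OF cC hs] by simp
    also have "\<dots> = add C (comp C (comp C j q) (comp C h s)) (comp C (comp C s s') (comp C h s))"
      using distr_r[OF P hs jqh ssh] .
    also have "comp C (comp C j q) (comp C h s) = zero C K N"
      using assoc[OF cC hs qh jh] qhs comp_zero_r[OF P jh K] by simp
    also have "comp C (comp C s s') (comp C h s) = comp C s (comp C s' (comp C h s))"
      using assoc[OF cC hs s' s] by simp
    also have "add C (zero C K N) (comp C s (comp C s' (comp C h s))) = comp C s (comp C s' (comp C h s))"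
      using zero_add[OF P comp_in[OF cC s'hs s]] .
    finally have "comp C h s = comp C s (comp C s' (comp C h s))" .
    then show "\<exists>\<alpha>\<in>hom C (dom C s) (dom C s). comp C h s = comp C s \<alpha>"
      using s'hs unfolding K_def by blast
  qed
qed


lemma p1_bwd:
  assumes "Rickart C M N" and "weak_duo C M"
  shows "strongly_Rickart C M N"
  unfolding strongly_Rickart_def
proof (intro ballI allI impI conjI)
  fix f k assume f: "f \<in> hom C M N" and k: "is_kernel C f k"
  show sec: "is_section C k" using assms(1) f k unfolding Rickart_def by blast
  have kk: "k \<in> hom C (dom C k) (dom C f)" using conjunct1[OF kernelD0[OF k]] .
  have "k \<in> Arr C" and "cod C k = M" using kk f unfolding hom_def by auto
  then show "fully_invariant C k" using assms(2) sec unfolding weak_duo_def by blast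
qed

lemma p1_sr_r: "strongly_Rickart C M N \<Longrightarrow> Rickart C M N"
  unfolding strongly_Rickart_def Rickart_def by blast

lemma p2_dsr_dr: "dual_strongly_Rickart C M N \<Longrightarrow> dual_Rickart C M N"
  unfolding dual_strongly_Rickart_def dual_Rickart_def by blast

lemma p2_bwd:
  assumes A: "abelian_category C" and DR: "dual_Rickart C M N" and WD: "weak_duo C N"
  shows "dual_strongly_Rickart C M N"
  unfolding dual_strongly_Rickart_def
proof (intro ballI allI impI conjI)
  have P: "preadditive C" using A by (rule abel_pa)
  have cC: "category C" using P by (rule pa_cat)
  fix f c assume f: "f \<in> hom C M N" and ck: "is_cokernel C f c"
  show ret: "is_retraction C c" using DR f ck unfolding dual_Rickart_def by blast
  define Q where "Q = cod C c"
  have ch: "c \<in> hom C N Q" using conjunct1[OF cokernelD0[OF ck]] f unfolding Q_def hom_def by simp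
  obtain r where r: "r \<in> hom C Q N" and cr: "comp C c r = idm C Q"
    using ret ch unfolding is_retraction_def Q_def hom_def by auto
  have Nobj: "N \<in> Obj C" and Q: "Q \<in> Obj C" using hom_obj[OF cC ch] by auto
  obtain L j q where jh: "j \<in> hom C L N" and qh: "q \<in> hom C N L" and qj: "comp C q j = idm C L"
    and jqrc: "add C (comp C j q) (comp C r c) = idm C N" and cj: "comp C c j = zero C L Q"
    using complement[OF A r ch cr] by blast
  have L: "L \<in> Obj C" using hom_obj[OF cC jh] by blast
  have "is_section C j" unfolding is_section_def
    using jh qh qj by (auto simp: hom_def)
  then have fij: "fully_invariant C j" using WD jh unfolding weak_duo_def hom_def by blast
  show "fully_coinvariant C c"
    unfolding fully_coinvariant_def
  proof (intro conjI ballI)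
    show "epi C c" using retraction_epi[OF cC ch r cr] .
    fix h assume hh0: "h \<in> hom C (dom C c) (dom C c)"
    have hh: "h \<in> hom C N N" using hh0 ch by (simp add: hom_def)
    obtain \<alpha> where ah: "\<alpha> \<in> hom C L L" and hja: "comp C h j = comp C j \<alpha>"
      using fij hh jh unfolding fully_invariant_def hom_def by auto
    have chh: "comp C c h \<in> hom C N Q" using comp_in[OF cC hh ch] .
    have jqh: "comp C j q \<in> hom C N N" using comp_in[OF cC qh jh] .
    have rch: "comp C r c \<in> hom C N N" using comp_in[OF cC ch r] .
    have hr: "comp C h r \<in> hom C Q N" using comp_in[OF cC r hh] .
    have ga: "comp C c (comp C h r) \<in> hom C Q Q" using comp_in[OF cC hr ch] .
    have chj: "comp C (comp C c h) j = zero C L Q"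
    proof -
      have "comp C (comp C c h) j = comp C c (comp C h j)" using assoc[OF cC jh hh ch] by simp
      also have "\<dots> = comp C (comp C c j) \<alpha>" using hja assoc[OF cC ah jh ch] by simp
      also have "\<dots> = zero C L Q" using cj comp_zero_l[OF P ah Q] by simp
      finally show ?thesis .
    qed
    have "comp C c h = comp C (comp C c h) (add C (comp C j q) (comp C r c))" using jqrc id_r[OF cC chh] by simp
    also have "\<dots> = add C (comp C (comp C c h) (comp C j q)) (comp C (comp C c h) (comp C r c))"
      using distr_l[OF P jqh rch chh] .
    also have "comp C (comp C c h) (comp C j q) = zero C N Q"
      using assoc[OF cC qh jh chh] chj comp_zero_l[OF P qh Q] by simp
    also have "comp C (comp C c h) (comp C r c) = comp C (comp C c (comp C h r)) c"
      using assoc[OF cC ch r chh] assoc[OF cC r hh ch] by simp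
    also have "add C (zero C N Q) (comp C (comp C c (comp C h r)) c) = comp C (comp C c (comp C h r)) c"
      using zero_add[OF P comp_in[OF cC ch ga]] .
    finally have "comp C c h = comp C (comp C c (comp C h r)) c" .
    then show "\<exists>\<gamma>\<in>hom C (cod C c) (cod C c). comp C c h = comp C \<gamma> c"
      using ga unfolding Q_def by blast
  qed
qed

theorem proposition2p9:
  fixes C :: "('o, 'm) cat" and M N :: 'o
  assumes "abelian_category C" and "M \<in> Obj C" and "N \<in> Obj C"
  shows "((\<forall>K. direct_summand C K M \<longrightarrow> iso_to_subobject C K N) \<longrightarrow>
            (strongly_Rickart C M N \<longleftrightarrow> Rickart C M N \<and> weak_duo C M)) \<and>
         ((\<forall>K. direct_summand C K N \<longrightarrow> iso_to_factor C K M) \<longrightarrow>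
            (dual_strongly_Rickart C M N \<longleftrightarrow> dual_Rickart C M N \<and> weak_duo C N))"
proof -
  have 1: "(\<forall>K. direct_summand C K M \<longrightarrow> iso_to_subobject C K N) \<longrightarrow>
            (strongly_Rickart C M N \<longleftrightarrow> Rickart C M N \<and> weak_duo C M)"
  proof (rule impI)
    assume H: "\<forall>K. direct_summand C K M \<longrightarrow> iso_to_subobject C K N"
    show "strongly_Rickart C M N \<longleftrightarrow> Rickart C M N \<and> weak_duo C M"
    proof (rule iffI)
      assume a: "strongly_Rickart C M N"
      show "Rickart C M N \<and> weak_duo C M" using p1_sr_r[OF a] p1_fwd[OF assms(1) assms(3) H a] by (rule conjI)
    next
      assume a: "Rickart C M N \<and> weak_duo C M"
      show "strongly_Rickart C M N" by (rule p1_bwd[OF conjunct1[OF a] conjunct2[OF a]])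
    qed
  qed
  have 2: "(\<forall>K. direct_summand C K N \<longrightarrow> iso_to_factor C K M) \<longrightarrow>
            (dual_strongly_Rickart C M N \<longleftrightarrow> dual_Rickart C M N \<and> weak_duo C N)"
  proof (rule impI)
    assume H: "\<forall>K. direct_summand C K N \<longrightarrow> iso_to_factor C K M"
    show "dual_strongly_Rickart C M N \<longleftrightarrow> dual_Rickart C M N \<and> weak_duo C N"
    proof (rule iffI)
      assume a: "dual_strongly_Rickart C M N"
      show "dual_Rickart C M N \<and> weak_duo C N" using p2_dsr_dr[OF a] p2_fwd[OF assms(1) assms(2) H a] by (rule conjI)
    next
      assume a: "dual_Rickart C M N \<and> weak_duo C N"
      show "dual_strongly_Rickart C M N" by (rule p2_bwd[OF assms(1) conjunct1[OF a] conjunct2[OF a]])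
    qed
  qed
  show ?thesis using 1 2 by (rule conjI)
qed

end
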